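(* Let $\mathcal{X}$ be a nonempty closed domain set whose closed convex hull $\operatorname{clconv}(\mathcal{X})$ contains no line, and let $0\le\tilde m\le m$ be integers. Suppose that for every face $F$ of $\operatorname{clconv}(\mathcal{X})$ of dimension at most $\tilde m$ and every face $\widehat F$ of the recession cone $\operatorname{rec}(\operatorname{clconv}(\mathcal{X}))$ of dimension at most $\tilde m+1$, the Minkowski sum satisfies $F+\widehat F\subseteq\mathcal{X}$. Then for every choice of $m$ LMIs of dimension $\tilde m$, $\mathcal{C}_{\mathrm{rel}}=\operatorname{clconv}(\mathcal{C})$.
   Context: Let $\mathcal{Q}$ be one of $\mathbb{S}^n_+$, $\mathbb{S}^n$ or $\mathbb{R}^{n\times p}$, where $k\le n\le p$ are positive integers, with trace inner product $\langle A,X\rangle=\operatorname{tr}(A^\top X)$. A domain set is a set $\mathcal{X}=\{X\in\mathcal{Q}:\operatorname{rank}(X)\le k,\ F_j(X)\le0\ \forall j\in[t]\}$ with each $F_j:\mathcal{Q}\to\mathbb{R}$ continuous. $\operatorname{clconv}$ is closed convex hull. A system of $m$ LMIs consists of matrices $A_1,\dots,A_m$ (same size as elements of $\mathcal{Q}$, possibly non-symmetric) and bounds $-\infty\le b_i^l\le b_i^u\le+\infty$; its dimension is $\dim\operatorname{span}\{A_1,\dots,A_m\}$. Set $\mathcal{C}=\{X\in\mathcal{X}: b_i^l\le\langle A_i,X\rangle\le b_i^u\ \forall i\}$ and $\mathcal{C}_{\mathrm{rel}}=\{X\in\operatorname{clconv}(\mathcal{X}): b_i^l\le\langle A_i,X\rangle\le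 b_i^u\ \forall i\}$. A face of a closed convex set $D$ is a convex $F\subseteq D$ such that any segment $[a,b]\subseteq D$ whose open part meets $F$ lies in $F$; its dimension is that of its affine hull. The recession cone of a closed convex set $D$ is $\operatorname{rec}(D)=\{d: x+td\in D\ \forall x\in D,\ t\ge0\}$. *)

theory Defs
  imports "HOL-Analysis.Analysis" "HOL-Library.Extended_Real"
begin

text \<open>Matrices in R^{n x p} are represented as real^'p^'n (n rows indexed by 'n,
  p columns indexed by 'p). Trace inner product <A,X> = tr(A^T X).\<close>

definition frob :: "real^'p^'n \<Rightarrow> real^'p^'n \<Rightarrow> real" where
  "frob A X = trace (transpose A ** X)"

definition sym_mats :: "(real^'n^'n) set" where
  "sym_mats = {X. transpose X = X}"

definition psd_mats :: "(real^'n^'n) set" where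
  "psd_mats = {X. transpose X = X \<and> (\<forall>v. 0 \<le> v \<bullet> (X *v v))}"

definition domain_set ::
  "(real^'p^'n) set \<Rightarrow> nat \<Rightarrow> nat \<Rightarrow> (nat \<Rightarrow> real^'p^'n \<Rightarrow> real) \<Rightarrow> (real^'p^'n) set" where
  "domain_set Q k t F = {X \<in> Q. rank X \<le> k \<and> (\<forall>j<t. F j X \<le> 0)}"

definition clconv :: "'a::real_normed_vector set \<Rightarrow> 'a set" where
  "clconv S = closure (convex hull S)"

definition rec_cone :: "'a::real_vector set \<Rightarrow> 'a set" where
  "rec_cone D = {d. \<forall>x\<in>D. \<forall>t::real. t \<ge> 0 \<longrightarrow> x + t *\<^sub>R d \<in> D}"

definition contains_line :: "'a::real_vector set \<Rightarrow> bool" where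
  "contains_line D \<longleftrightarrow> (\<exists>x d. d \<noteq> 0 \<and> (\<forall>t::real. x + t *\<^sub>R d \<in> D))"

definition minkowski_sum :: "'a::real_vector set \<Rightarrow> 'a set \<Rightarrow> 'a set" where
  "minkowski_sum F G = {x + y | x y. x \<in> F \<and> y \<in> G}"

definition lmi_cut ::
  "(real^'p^'n) set \<Rightarrow> nat \<Rightarrow> (nat \<Rightarrow> real^'p^'n) \<Rightarrow> (nat \<Rightarrow> ereal) \<Rightarrow> (nat \<Rightarrow> ereal) \<Rightarrow> (real^'p^'n) set" where
  "lmi_cut S m A bl bu = {X \<in> S. \<forall>i<m. bl i \<le> ereal (frob (A i) X) \<and> ereal (frob (A i) X) \<le> bu i}"

definition theorem3_prop :: "(real^'p^'n) set \<Rightarrow> nat \<Rightarrow> nat \<Rightarrow> nat \<Rightarrow> bool" where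
  "theorem3_prop Q k mt m \<longleftrightarrow>
    (\<forall>(t::nat) (F :: nat \<Rightarrow> real^'p^'n \<Rightarrow> real).
      (\<forall>j<t. continuous_on Q (F j)) \<longrightarrow>
      domain_set Q k t F \<noteq> {} \<longrightarrow>
      closed (domain_set Q k t F) \<longrightarrow>
      \<not> contains_line (clconv (domain_set Q k t F)) \<longrightarrow>
      (\<forall>Fc Fr. Fc face_of clconv (domain_set Q k t F) \<and> aff_dim Fc \<le> int mt \<and>
               Fr face_of rec_cone (clconv (domain_set Q k t F)) \<and> aff_dim Fr \<le> int mt + 1
               \<longrightarrow> minkowski_sum Fc Fr \<subseteq> domain_set Q k t F) \<longrightarrow>
      (\<forall>(A :: nat \<Rightarrow> real^'p^'n) (bl :: nat \<Rightarrow> ereal) (bu :: nat \<Rightarrow> ereal).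
         (\<forall>i<m. bl i \<le> bu i) \<longrightarrow>
         dim (span (A ` {..<m})) = mt \<longrightarrow>
         lmi_cut (clconv (domain_set Q k t F)) m A bl bu
           = clconv (lmi_cut (domain_set Q k t F) m A bl bu)))"

end

theory Submission
  imports Defs
begin


lemma rec_one_point:
  fixes D :: "'a::real_normed_vector set"
  assumes "closed D" "convex D" "x \<in> D" "\<forall>t\<ge>0. x + t *\<^sub>R d \<in> D"
  shows "d \<in> rec_cone D"
  unfolding rec_cone_def
proof (intro CollectI ballI allI impI)
  fix y t :: "_" assume y: "y \<in> D" and t: "(t::real) \<ge> 0"
  define f where "f n = y + t *\<^sub>R d + inverse (real (Suc n)) *\<^sub>R (x - y)" for n
  have "f n \<in> D" for n
  proof -
    let ?l = "inverse (real (Suc n))"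
    have l: "0 < ?l" "?l \<le> 1" by (auto simp: field_simps)
    have "x + (t / ?l) *\<^sub>R d \<in> D" using assms(4) t l by simp
    hence "(1 - ?l) *\<^sub>R y + ?l *\<^sub>R (x + (t / ?l) *\<^sub>R d) \<in> D"
      using convexD[OF assms(2) y] l by simp
    moreover have "(1 - ?l) *\<^sub>R y + ?l *\<^sub>R (x + (t / ?l) *\<^sub>R d) = f n"
      using l by (simp add: f_def algebra_simps)
    ultimately show ?thesis by simp
  qed
  moreover have "f \<longlonglongrightarrow> y + t *\<^sub>R d + 0 *\<^sub>R (x - y)"
    unfolding f_def
    by (intro tendsto_intros LIMSEQ_inverse_real_of_nat)
  hence "f \<longlonglongrightarrow> y + t *\<^sub>R d" by simp
  ultimately show "y + t *\<^sub>R d \<in> D" by (rule closed_sequentially[OF assms(1)])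
qed

lemma zero_face:
  fixes K :: "'a::real_normed_vector set"
  assumes "K \<noteq> {}" "\<not> contains_line K"
  shows "{0} face_of rec_cone K"
  unfolding face_of_def
proof (intro conjI ballI impI)
  show "{0} \<subseteq> rec_cone K" by (auto simp: rec_cone_def)
  show "convex {0::'a}" by simp
  fix a b w assume a: "a \<in> rec_cone K" and b: "b \<in> rec_cone K" and w: "w \<in> {0}"
    and ws: "w \<in> open_segment a b"
  obtain u where ab: "a \<noteq> b" and u: "0 < u" "u < 1" and eq: "w = (1 - u) *\<^sub>R a + u *\<^sub>R b"
    using ws in_segment(2) by metis
  have eq0: "(1 - u) *\<^sub>R a + u *\<^sub>R b = 0" using eq w by simp
  hence "(1 - u) *\<^sub>R a = (- u) *\<^sub>R b" by (simp add: eq_neg_iff_add_eq_0)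
  hence "inverse (1 - u) *\<^sub>R ((1 - u) *\<^sub>R a) = inverse (1 - u) *\<^sub>R ((- u) *\<^sub>R b)" by simp
  hence aeq: "a = (- u / (1 - u)) *\<^sub>R b" using u by (simp add: divide_inverse_commute)
  have b0: "b \<noteq> 0" using ab aeq by auto
  obtain x0 where x0: "x0 \<in> K" using assms(1) by blast
  have "x0 + t *\<^sub>R b \<in> K" for t
  proof (cases "t \<ge> 0")
    case True then show ?thesis using b x0 by (auto simp: rec_cone_def)
  next
    case False
    define s where "s = - t * (1 - u) / u"
    have "t * (1 - u) \<le> 0" using False u by (simp add: mult_nonpos_nonneg)
    hence s: "s \<ge> 0" using u unfolding s_def by (simp add: divide_nonpos_pos)
    have "x0 + s *\<^sub>R a \<in> K" using a x0 s by (auto simp: rec_cone_def)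
    moreover have "s *\<^sub>R a = t *\<^sub>R b" using u by (simp add: aeq s_def)
    ultimately show ?thesis by simp
  qed
  hence "contains_line K" unfolding contains_line_def using b0 by blast
  with assms(2) show "a \<in> {0}" "b \<in> {0}" by blast+
qed



lemma rec_face:
  fixes K G :: "'a::euclidean_space set"
  assumes K: "closed K" "convex K" and G: "G face_of K" "G \<noteq> {}"
  shows "rec_cone G face_of rec_cone K"
proof -
  have Gc: "closed G" using face_of_imp_closed K G by blast
  have Gv: "convex G" using face_of_imp_convex G by blast
  have GK: "G \<subseteq> K" using G face_of_imp_subset by blast
  obtain g where g: "g \<in> G" using G by blast
  show ?thesis unfolding face_of_def
  proof (intro conjI ballI impI)
    show "rec_cone G \<subseteq> rec_cone K"
    proof
      fix d assume "d \<in> rec_cone G"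
      hence "\<forall>t\<ge>0. g + t *\<^sub>R d \<in> K" using g GK by (auto simp: rec_cone_def)
      thus "d \<in> rec_cone K" using rec_one_point[OF K] g GK by blast
    qed
    show "convex (rec_cone G)"
      unfolding convex_def
    proof (intro ballI allI impI)
      fix a b and u v :: real assume a: "a \<in> rec_cone G" and b: "b \<in> rec_cone G"
        and uv: "0 \<le> u" "0 \<le> v" "u + v = 1"
      show "u *\<^sub>R a + v *\<^sub>R b \<in> rec_cone G"
        unfolding rec_cone_def
      proof (intro CollectI ballI allI impI)
        fix y and t :: real assume y: "y \<in> G" and t: "0 \<le> t"
        have "y + t *\<^sub>R a \<in> G" "y + t *\<^sub>R b \<in> G" using a b y t by (auto simp: rec_cone_def)
        hence "u *\<^sub>R (y + t *\<^sub>R a) + v *\<^sub>R (y + t *\<^sub>R b) \<in> G"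
          using convexD[OF Gv] uv by blast
        moreover have "u *\<^sub>R (y + t *\<^sub>R a) + v *\<^sub>R (y + t *\<^sub>R b) = y + t *\<^sub>R (u *\<^sub>R a + v *\<^sub>R b)"
          using uv by (simp add: algebra_simps flip: scaleR_add_left)
        ultimately show "y + t *\<^sub>R (u *\<^sub>R a + v *\<^sub>R b) \<in> G" by simp
      qed
    qed
  next
    fix a b w assume a: "a \<in> rec_cone K" and b: "b \<in> rec_cone K" and w: "w \<in> rec_cone G"
      and ws: "w \<in> open_segment a b"
    obtain u where ab: "a \<noteq> b" and u: "0 < u" "u < 1" and eq: "w = (1 - u) *\<^sub>R a + u *\<^sub>R b"
      using ws in_segment(2) by metis
    have both: "g + t *\<^sub>R a \<in> G \<and> g + t *\<^sub>R b \<in> G" if t: "t \<ge> 0" for t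
    proof (cases "t = 0")
      case True then show ?thesis using g by simp
    next
      case False
      hence tp: "t > 0" using t by simp
      have gw: "g + t *\<^sub>R w \<in> G" using w g t by (auto simp: rec_cone_def)
      have inK: "g + t *\<^sub>R a \<in> K" "g + t *\<^sub>R b \<in> K" using a b g GK t by (auto simp: rec_cone_def)
      have ne: "g + t *\<^sub>R a \<noteq> g + t *\<^sub>R b" using ab tp by simp
      have "g + t *\<^sub>R w = (1 - u) *\<^sub>R (g + t *\<^sub>R a) + u *\<^sub>R (g + t *\<^sub>R b)"
        by (simp add: eq algebra_simps flip: scaleR_add_left)
      hence "g + t *\<^sub>R w \<in> open_segment (g + t *\<^sub>R a) (g + t *\<^sub>R b)"
        using ne u in_segment(2) by blast
      thus ?thesis using G(1) inK gw unfolding face_of_def by blast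
    qed
    show "a \<in> rec_cone G" using rec_one_point[OF Gc Gv g] both by blast
    show "b \<in> rec_cone G" using rec_one_point[OF Gc Gv g] both by blast
  qed
qed

lemma rec_aff_dim:
  fixes G :: "'a::euclidean_space set"
  assumes "G \<noteq> {}"
  shows "aff_dim (rec_cone G) \<le> aff_dim G"
proof -
  obtain g where g: "g \<in> G" using assms by blast
  have "rec_cone G \<subseteq> (+) (- g) ` G"
  proof
    fix v assume "v \<in> rec_cone G"
    hence "\<forall>t\<ge>0. g + t *\<^sub>R v \<in> G" using g unfolding rec_cone_def by blast
    hence "g + (1::real) *\<^sub>R v \<in> G" by (rule allE[where x=1]) simp
    thus "v \<in> (+) (- g) ` G" by (rule rev_image_eqI) simp
  qed
  hence "aff_dim (rec_cone G) \<le> aff_dim ((+) (- g) ` G)" by (rule aff_dim_subset)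
  thus ?thesis using aff_dim_translation_eq[of "- g" G] by simp
qed

lemma proper_face:
  fixes G :: "'a::euclidean_space set"
  assumes "closed G" "convex G" "y \<in> G" "y \<notin> rel_interior G"
  obtains G' where "G' face_of G" "y \<in> G'" "aff_dim G' < aff_dim G"
proof -
  obtain a where a: "a \<noteq> 0" "\<And>z. z \<in> closure G \<Longrightarrow> a \<bullet> y \<le> a \<bullet> z"
    "\<And>z. z \<in> rel_interior G \<Longrightarrow> a \<bullet> y < a \<bullet> z"
    using supporting_hyperplane_relative_frontier[OF assms(2)] assms closure_subset by blast
  let ?G' = "G \<inter> {z. a \<bullet> z = a \<bullet> y}"
  have f: "?G' face_of G"
    by (rule face_of_Int_supporting_hyperplane_ge) (use assms a closure_subset in auto)
  have "rel_interior G \<noteq> {}" using assms rel_interior_eq_empty by blast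
  then obtain r where r: "r \<in> rel_interior G" by blast
  have "a \<bullet> y < a \<bullet> r" using a(3)[OF r] .
  hence "r \<notin> ?G'" by simp
  moreover have "r \<in> G" using r rel_interior_subset by blast
  ultimately have "?G' \<noteq> G" by blast
  hence "aff_dim ?G' < aff_dim G" using face_of_aff_dim_lt[OF assms(2) f] by blast
  thus ?thesis using that f assms(3) by blast
qed



lemma exit_point:
  fixes G :: "'a::euclidean_space set"
  assumes G: "closed G" "convex G" and x: "x \<in> rel_interior G"
    and d: "d \<in> span ((+) (- x) ` G)" and nt: "\<not> (\<forall>t\<ge>0. x + t *\<^sub>R d \<in> G)"
  obtains t where "t > 0" "x + t *\<^sub>R d \<in> G" "x + t *\<^sub>R d \<notin> rel_interior G"
proof -
  have xG: "x \<in> G" using x rel_interior_subset by blast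
  have "\<exists>T. T \<ge> 0 \<and> x + T *\<^sub>R d \<notin> G" using nt by simp
  then obtain T where T: "T \<ge> 0" "x + T *\<^sub>R d \<notin> G" by blast
  define I where "I = {t. 0 \<le> t \<and> x + t *\<^sub>R d \<in> G}"
  have aff: "x + s *\<^sub>R d \<in> affine hull G" for s
  proof -
    have "x \<in> affine hull G" using xG by (rule hull_inc)
    hence eq: "affine hull G = (\<lambda>y. x + y) ` span ((\<lambda>y. - x + y) ` G)" by (rule affine_hull_span_gen)
    have "s *\<^sub>R d \<in> span ((\<lambda>y. - x + y) ` G)" using d by (intro span_scale) simp
    hence "x + s *\<^sub>R d \<in> (\<lambda>y. x + y) ` span ((\<lambda>y. - x + y) ` G)" by (rule imageI)
    thus ?thesis by (subst eq)
  qed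
  have I_bound: "t \<le> T" if "t \<in> I" for t
  proof (rule ccontr)
    assume "\<not> t \<le> T" hence tT: "T < t" by simp
    with T have tp: "t > 0" by simp
    have xt: "x + t *\<^sub>R d \<in> G" using that I_def by simp
    have c: "0 \<le> 1 - T / t" "0 \<le> T / t" "(1 - T / t) + T / t = 1" using T tT tp by (auto simp: field_simps)
    have "(1 - T/t) *\<^sub>R x + (T/t) *\<^sub>R (x + t *\<^sub>R d) \<in> G"
      using convexD[OF G(2) xG xt c] .
    moreover have "(1 - T/t) *\<^sub>R x + (T/t) *\<^sub>R (x + t *\<^sub>R d) = x + T *\<^sub>R d"
      using tp by (simp add: algebra_simps)
    ultimately show False using T by simp
  qed
  have "closed I"
  proof -
    have "I = {0..} \<inter> (\<lambda>t. x + t *\<^sub>R d) -` G" by (auto simp: I_def)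
    moreover have "closed ((\<lambda>t. x + t *\<^sub>R d) -` G)"
      by (rule continuous_closed_vimage[OF G(1)]) (intro continuous_intros)
    ultimately show ?thesis by (simp add: closed_Int)
  qed
  moreover have "0 \<in> I" using xG I_def by simp
  moreover have bdd: "bdd_above I" using I_bound by (rule bdd_aboveI)
  ultimately have t1I': "Sup I \<in> I" using closed_contains_Sup by blast
  define t1 where "t1 = Sup I"
  have t1I: "t1 \<in> I" using t1I' t1_def by simp
  have t1n: "t1 \<ge> 0" and t1G: "x + t1 *\<^sub>R d \<in> G" using t1I unfolding I_def by auto
  have d0: "d \<noteq> 0" using T xG by auto
  have nri: "x + t1 *\<^sub>R d \<notin> rel_interior G"
  proof
    assume "x + t1 *\<^sub>R d \<in> rel_interior G"
    then obtain e where e: "e > 0" "ball (x + t1 *\<^sub>R d) e \<inter> affine hull G \<subseteq> G"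
      using mem_rel_interior_ball by blast
    define s where "s = t1 + e / (2 * norm d)"
    have nd: "norm d > 0" using d0 by simp
    have st: "s > t1" using e nd by (simp add: s_def)
    have "dist (x + t1 *\<^sub>R d) (x + s *\<^sub>R d) = norm ((s - t1) *\<^sub>R d)"
      by (simp add: dist_norm algebra_simps norm_minus_commute)
    also have "\<dots> = e / 2" using e nd by (simp add: s_def)
    finally have "x + s *\<^sub>R d \<in> ball (x + t1 *\<^sub>R d) e" using e by simp
    hence "x + s *\<^sub>R d \<in> ball (x + t1 *\<^sub>R d) e \<inter> affine hull G" using aff by simp
    hence "x + s *\<^sub>R d \<in> G" by (rule subsetD[OF e(2)])
    moreover have "s \<ge> 0" using st t1n by simp
    ultimately have "s \<in> I" by (simp add: I_def)
    hence "s \<le> t1" unfolding t1_def using bdd by (rule cSup_upper)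
    with st show False by simp
  qed
  have "t1 \<noteq> 0" using nri x by auto
  hence "t1 > 0" using t1n by simp
  thus ?thesis using that nri t1G by blast
qed

lemma orth_vec:
  fixes D :: "'a::euclidean_space set"
  assumes D: "subspace D" and B: "finite B" "card B < dim D"
  obtains u where "u \<in> D" "u \<noteq> 0" "\<forall>b\<in>B. b \<bullet> u = 0"
proof -
  define f where "f w = (\<Sum>b\<in>B. (b \<bullet> w) *\<^sub>R b)" for w
  have lin: "linear f"
    by (rule linearI) (simp_all add: f_def inner_add_right scaleR_add_left sum.distrib scaleR_sum_right)
  have fw: "f w \<in> span B" for w
    unfolding f_def apply (rule span_sum) apply (rule span_scale) apply (erule span_base) done
  hence "f ` D \<subseteq> span B" by blast
  hence le: "dim (f ` D) \<le> card B" using dim_le_card B(1) by blast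
  have "\<not> inj_on f D"
  proof
    assume inj: "inj_on f D"
    have sD: "span D = D" using D by simp
    from inj sD have "inj_on f (span D)" by (simp only:)
    from dim_image_eq[OF lin this] have "dim (f ` D) = dim D" .
    with le B show False by simp
  qed
  then obtain v w where vw: "v \<in> D" "w \<in> D" "v \<noteq> w" "f v = f w" unfolding inj_on_def by blast
  define u where "u = v - w"
  have uD: "u \<in> D" using D vw subspace_diff u_def by blast
  have u0: "u \<noteq> 0" using vw u_def by simp
  have "f u = 0" using vw linear_diff[OF lin] u_def by simp
  hence "u \<bullet> f u = 0" by simp
  moreover have "u \<bullet> f u = (\<Sum>b\<in>B. (b \<bullet> u) * (b \<bullet> u))"
    by (simp add: f_def inner_sum_right inner_commute)
  ultimately have "(\<Sum>b\<in>B. (b \<bullet> u) * (b \<bullet> u)) = 0" by simp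
  hence "\<forall>b\<in>B. (b \<bullet> u) * (b \<bullet> u) = 0"
    using sum_nonneg_eq_0_iff[OF B(1), of "\<lambda>b. (b \<bullet> u) * (b \<bullet> u)"] by simp
  hence "\<forall>b\<in>B. b \<bullet> u = 0" by simp
  thus ?thesis using that uD u0 by blast
qed

lemma circle_dir:
  fixes S :: "'a::real_normed_vector set"
  assumes S: "closed S" and ind: "\<And>a b. a *\<^sub>R u + b *\<^sub>R v = 0 \<Longrightarrow> a = 0 \<and> b = 0"
    and pt: "\<And>e. e \<in> S \<Longrightarrow> - e \<in> S \<Longrightarrow> e = 0"
  obtains \<theta> where "cos \<theta> *\<^sub>R u + sin \<theta> *\<^sub>R v \<notin> S" "- (cos \<theta> *\<^sub>R u + sin \<theta> *\<^sub>R v) \<notin> S"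
proof (rule ccontr)
  assume "\<not> thesis"
  hence H: "\<forall>\<theta>. cos \<theta> *\<^sub>R u + sin \<theta> *\<^sub>R v \<in> S \<or> - (cos \<theta> *\<^sub>R u + sin \<theta> *\<^sub>R v) \<in> S"
    using that by blast
  define e where "e \<theta> = cos \<theta> *\<^sub>R u + sin \<theta> *\<^sub>R v" for \<theta>
  have ne: "e \<theta> \<noteq> 0" for \<theta>
  proof
    assume "e \<theta> = 0"
    hence "cos \<theta> = 0 \<and> sin \<theta> = 0" using ind[of "cos \<theta>" "sin \<theta>"] unfolding e_def by blast
    thus False using sin_cos_squared_add[of \<theta>] by simp
  qed
  have u0: "u \<noteq> 0" using ind[of 1 0] by auto
  define A where "A = e -` S"
  define B where "B = (\<lambda>\<theta>. - e \<theta>) -` S"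
  have cA: "closed A" unfolding A_def e_def
    by (rule continuous_closed_vimage[OF S]) (intro continuous_intros)
  have cB: "closed B" unfolding B_def e_def
    by (rule continuous_closed_vimage[OF S]) (intro continuous_intros)
  have cov: "UNIV \<subseteq> A \<union> B" using H by (auto simp: A_def B_def e_def)
  have dis: "A \<inter> B \<inter> UNIV = {}" using pt ne by (auto simp: A_def B_def)
  have e0: "e 0 = u" "e pi = - u" by (simp_all add: e_def)
  have "0 \<in> A \<and> pi \<in> B \<or> 0 \<in> B \<and> pi \<in> A"
  proof (cases "u \<in> S")
    case True
    hence "- u \<notin> S" using pt u0 by blast
    thus ?thesis using True e0 cov by (auto simp: A_def B_def)
  next
    case False
    thus ?thesis using e0 cov by (auto simp: A_def B_def)
  qed
  hence "A \<inter> UNIV \<noteq> {} \<and> B \<inter> UNIV \<noteq> {}" by blast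
  hence "\<exists>A B. closed A \<and> closed B \<and> (UNIV::real set) \<subseteq> A \<union> B \<and> A \<inter> B \<inter> UNIV = {} \<and> A \<inter> UNIV \<noteq> {} \<and> B \<inter> UNIV \<noteq> {}"
    using cA cB cov dis by (intro exI[of _ A] exI[of _ B]) simp
  thus False using connected_closed[of "UNIV :: real set"] connected_UNIV by simp
qed



lemma core:
  fixes Xs P K B :: "'a::euclidean_space set" and mt :: nat
  assumes K: "K = clconv Xs" and ne: "Xs \<noteq> {}" and nl: "\<not> contains_line K"
    and fc: "\<forall>Fc Fr. Fc face_of K \<and> aff_dim Fc \<le> int mt \<and> Fr face_of rec_cone K \<and> aff_dim Fr \<le> int mt + 1
               \<longrightarrow> minkowski_sum Fc Fr \<subseteq> Xs"
    and B: "finite B" "card B \<le> mt"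
    and Pinv: "\<And>x d. x \<in> P \<Longrightarrow> (\<forall>b\<in>B. b \<bullet> d = 0) \<Longrightarrow> x + d \<in> P"
  shows "K \<inter> P \<subseteq> convex hull (Xs \<inter> P)"
proof -
  have Kc: "closed K" using K by (simp add: clconv_def)
  have Kv: "convex K" using K by (simp add: clconv_def convex_closure)
  have XK: "Xs \<subseteq> K" using K closure_subset hull_subset unfolding clconv_def by fastforce
  have Kne: "K \<noteq> {}" using XK ne by blast
  have R0: "{0} face_of rec_cone K" using zero_face[OF Kne nl] .
  have Pinv': "x + t *\<^sub>R d \<in> P" if "x \<in> P" "\<forall>b\<in>B. b \<bullet> d = 0" for x d and t :: real
    using Pinv[OF that(1)] that(2) by simp
  have hullI: "x \<in> convex hull (Xs \<inter> P)" if "x \<in> Xs" "x \<in> P" for x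
    using that by (intro hull_inc) simp
  have base: "G \<subseteq> Xs" if "G face_of K" "aff_dim G \<le> int mt" for G
  proof -
    have "minkowski_sum G {0} \<subseteq> Xs" using fc that R0 by simp
    moreover have "minkowski_sum G {0} = G" by (auto simp: minkowski_sum_def)
    ultimately show ?thesis by simp
  qed
  have line: "False" if "d \<noteq> 0" "G \<subseteq> K" "\<forall>t\<ge>0. x + t *\<^sub>R d \<in> G" "\<forall>t\<ge>0. x + t *\<^sub>R (- d) \<in> G" for d x G
  proof -
    have "x + t *\<^sub>R d \<in> K" for t
    proof (cases "t \<ge> 0")
      case True then show ?thesis using that by blast
    next
      case False
      hence "x + (- t) *\<^sub>R (- d) \<in> G" using that(4)[rule_format, of "- t"] by simp
      thus ?thesis using that(2) by auto
    qed
    thus False using nl that(1) unfolding contains_line_def by blast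
  qed
  have main: "\<forall>G. G face_of K \<longrightarrow> aff_dim G < int n \<longrightarrow> G \<inter> P \<subseteq> convex hull (Xs \<inter> P)" for n
  proof (induction n)
    case 0
    show ?case
    proof (intro allI impI)
      fix G :: "'a set" assume "aff_dim G < int 0"
      hence "G = {}" using aff_dim_geq[of G] aff_dim_empty[of G] by simp
      thus "G \<inter> P \<subseteq> convex hull (Xs \<inter> P)" by simp
    qed
  next
    case (Suc n)
    show ?case
    proof (intro allI impI subsetI)
      fix G x assume G: "G face_of K" and Gd: "aff_dim G < int (Suc n)" and xGP: "x \<in> G \<inter> P"
      have xG: "x \<in> G" and xP: "x \<in> P" using xGP by auto
      have Gc: "closed G" using face_of_imp_closed[OF Kv Kc G] .
      have Gv: "convex G" using face_of_imp_convex[OF G] .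
      have GK: "G \<subseteq> K" using face_of_imp_subset[OF G] .
      have Gne: "G \<noteq> {}" using xG by blast
      have sub: "y \<in> convex hull (Xs \<inter> P)" if yy: "y \<in> G" "y \<notin> rel_interior G" "y \<in> P" for y
      proof -
        obtain G' where G': "G' face_of G" "y \<in> G'" "aff_dim G' < aff_dim G"
          using proper_face[OF Gc Gv yy(1,2)] by blast
        have "G' face_of K" using face_of_trans[OF G'(1) G] .
        moreover have "aff_dim G' < int n" using G'(3) Gd by simp
        ultimately show ?thesis using Suc.IH G'(2) yy(3) by blast
      qed
      show "x \<in> convex hull (Xs \<inter> P)"
      proof (cases "aff_dim G \<le> int mt")
        case True
        thus ?thesis using base[OF G] xG xP hullI by blast
      next
        case big: False
        show ?thesis
        proof (cases "x \<in> rel_interior G")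
          case False
          thus ?thesis using sub xG xP by blast
        next
          case xri: True
          define D where "D = span ((+) (- x) ` G)"
          have sD: "subspace D" unfolding D_def by simp
          have "x \<in> affine hull G" using xG by (rule hull_inc)
          hence dimD: "int (dim D) = aff_dim G" unfolding D_def using aff_dim_eq_dim[of x G] by simp
          have caseA: "x \<in> convex hull (Xs \<inter> P)"
            if d: "d \<in> D" "\<forall>b\<in>B. b \<bullet> d = 0" "\<not> (\<forall>t\<ge>0. x + t *\<^sub>R d \<in> G)"
               "\<not> (\<forall>t\<ge>0. x + t *\<^sub>R (- d) \<in> G)" for d
          proof -
            obtain t1 where t1: "t1 > 0" "x + t1 *\<^sub>R d \<in> G" "x + t1 *\<^sub>R d \<notin> rel_interior G"
              using exit_point[OF Gc Gv xri _ d(3)] d(1) unfolding D_def by blast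
            have "- d \<in> D" using d(1) sD by (simp add: subspace_neg)
            then obtain t2 where t2: "t2 > 0" "x + t2 *\<^sub>R (- d) \<in> G" "x + t2 *\<^sub>R (- d) \<notin> rel_interior G"
              using exit_point[OF Gc Gv xri _ d(4)] unfolding D_def by blast
            have y: "x + t1 *\<^sub>R d \<in> convex hull (Xs \<inter> P)"
              using sub[OF t1(2,3)] Pinv'[OF xP d(2)] by blast
            have z: "x + (- t2) *\<^sub>R d \<in> convex hull (Xs \<inter> P)"
            proof -
              have "x + (- t2) *\<^sub>R d \<in> P" using Pinv'[OF xP d(2)] .
              moreover have "x + (- t2) *\<^sub>R d \<in> G" "x + (- t2) *\<^sub>R d \<notin> rel_interior G"
                using t2(2,3) by simp_all
              ultimately show ?thesis using sub by blast
            qed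
            have c: "0 \<le> t2 / (t1 + t2)" "0 \<le> t1 / (t1 + t2)" "t2 / (t1 + t2) + t1 / (t1 + t2) = 1"
            proof -
              have tp: "t1 + t2 > 0" using t1(1) t2(1) by simp
              show "0 \<le> t2 / (t1 + t2)" using t2(1) tp by simp
              show "0 \<le> t1 / (t1 + t2)" using t1(1) tp by simp
              have "t2 / (t1 + t2) + t1 / (t1 + t2) = (t2 + t1) / (t1 + t2)" by (simp add: add_divide_distrib)
              thus "t2 / (t1 + t2) + t1 / (t1 + t2) = 1" using tp by (simp add: add.commute)
            qed
            have "(t2 / (t1 + t2)) *\<^sub>R (x + t1 *\<^sub>R d) + (t1 / (t1 + t2)) *\<^sub>R (x + (- t2) *\<^sub>R d)
                  \<in> convex hull (Xs \<inter> P)"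
              using convexD[OF convex_convex_hull y z c] .
            moreover have "(t2 / (t1 + t2)) *\<^sub>R (x + t1 *\<^sub>R d) + (t1 / (t1 + t2)) *\<^sub>R (x + (- t2) *\<^sub>R d) = x"
            proof -
              have "(t2 / (t1 + t2)) *\<^sub>R (x + t1 *\<^sub>R d) + (t1 / (t1 + t2)) *\<^sub>R (x + (- t2) *\<^sub>R d)
                    = (t2 / (t1 + t2) + t1 / (t1 + t2)) *\<^sub>R x + (t2 / (t1 + t2) * t1 - t1 / (t1 + t2) * t2) *\<^sub>R d"
                by (simp add: algebra_simps)
              also have "\<dots> = x" using c(3) by simp
              finally show ?thesis .
            qed
            ultimately show ?thesis by simp
          qed
          show ?thesis
          proof (cases "aff_dim G \<le> int mt + 1")
            case True
            have "card B < dim D" using B(2) big dimD by linarith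
            then obtain d where d: "d \<in> D" "d \<noteq> 0" "\<forall>b\<in>B. b \<bullet> d = 0"
              using orth_vec[OF sD B(1)] by blast
            show ?thesis
            proof (cases "\<not> (\<forall>t\<ge>0. x + t *\<^sub>R d \<in> G) \<and> \<not> (\<forall>t\<ge>0. x + t *\<^sub>R (- d) \<in> G)")
              case True
              thus ?thesis using caseA d by blast
            next
              case False
              obtain d' where d': "d' \<in> D" "d' \<noteq> 0" "\<forall>b\<in>B. b \<bullet> d' = 0"
                "\<forall>t\<ge>0. x + t *\<^sub>R d' \<in> G" "\<not> (\<forall>t\<ge>0. x + t *\<^sub>R (- d') \<in> G)"
              proof (cases "\<forall>t\<ge>0. x + t *\<^sub>R d \<in> G")
                case True
                hence "\<not> (\<forall>t\<ge>0. x + t *\<^sub>R (- d) \<in> G)" using line[OF d(2) GK] by blast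
                thus ?thesis using that d True by blast
              next
                case nd: False
                hence st: "\<forall>t\<ge>0. x + t *\<^sub>R (- d) \<in> G" using False by blast
                have "- d \<in> D" using d(1) sD by (simp add: subspace_neg)
                moreover have "\<forall>b\<in>B. b \<bullet> (- d) = 0" using d(3) by simp
                moreover have "\<not> (\<forall>t\<ge>0. x + t *\<^sub>R (- (- d)) \<in> G)" using nd by simp
                ultimately show ?thesis using that[of "- d"] d(2) st by simp
              qed
              have "- d' \<in> D" using d'(1) sD by (simp add: subspace_neg)
              then obtain t2 where t2: "t2 > 0" "x + t2 *\<^sub>R (- d') \<in> G" "x + t2 *\<^sub>R (- d') \<notin> rel_interior G"
                using exit_point[OF Gc Gv xri _ d'(5)] unfolding D_def by blast
              obtain G' where G': "G' face_of G" "x + t2 *\<^sub>R (- d') \<in> G'" "aff_dim G' < aff_dim G"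
                using proper_face[OF Gc Gv t2(2,3)] by blast
              have G'K: "G' face_of K" using face_of_trans[OF G'(1) G] .
              have G'd: "aff_dim G' \<le> int mt" using G'(3) True by simp
              have RG: "rec_cone G face_of rec_cone K" using rec_face[OF Kc Kv G Gne] .
              have RGd: "aff_dim (rec_cone G) \<le> int mt + 1" using rec_aff_dim[OF Gne] True by simp
              have d'R: "d' \<in> rec_cone G" using rec_one_point[OF Gc Gv xG d'(4)] .
              have "t2 *\<^sub>R d' \<in> rec_cone G"
                unfolding rec_cone_def
              proof (intro CollectI ballI allI impI)
                fix y and t :: real assume "y \<in> G" "0 \<le> t"
                hence "y + (t * t2) *\<^sub>R d' \<in> G" using d'R t2(1) unfolding rec_cone_def by simp
                thus "y + t *\<^sub>R t2 *\<^sub>R d' \<in> G" by simp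
              qed
              hence "(x + t2 *\<^sub>R (- d')) + t2 *\<^sub>R d' \<in> minkowski_sum G' (rec_cone G)"
                using G'(2) unfolding minkowski_sum_def by blast
              hence "x \<in> minkowski_sum G' (rec_cone G)" by simp
              hence "x \<in> Xs" using fc G'K G'd RG RGd by blast
              thus ?thesis using xP hullI by blast
            qed
          next
            case False
            have "card B < dim D" using B(2) False dimD by linarith
            then obtain u where u: "u \<in> D" "u \<noteq> 0" "\<forall>b\<in>B. b \<bullet> u = 0"
              using orth_vec[OF sD B(1)] by blast
            have "card (insert u B) < dim D"
              using card_insert_le_m1 B False dimD
              by (metis Suc_le_eq card_insert_if le_SucI not_less_eq_eq of_nat_Suc int_ops(4) add.commute
                  order.strict_trans1 zle_int  linorder_not_le)
            then obtain v where v: "v \<in> D" "v \<noteq> 0" "\<forall>b\<in>insert u B. b \<bullet> v = 0"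
              using orth_vec[OF sD] B(1) by blast
            have uv: "u \<bullet> v = 0" using v by simp
            have ind: "a = 0 \<and> b = 0" if "a *\<^sub>R u + b *\<^sub>R v = 0" for a b
            proof -
              have "u \<bullet> (a *\<^sub>R u + b *\<^sub>R v) = 0" using that by simp
              hence "a * (u \<bullet> u) = 0" using uv by (simp add: inner_add_right)
              hence a0: "a = 0" using u(2) by simp
              hence "b *\<^sub>R v = 0" using that by simp
              thus ?thesis using a0 v(2) by simp
            qed
            define S where "S = {e. \<forall>t\<ge>0. x + t *\<^sub>R e \<in> G}"
            have "S = (\<Inter>t\<in>{0..}. (\<lambda>e. x + t *\<^sub>R e) -` G)" by (auto simp: S_def)
            moreover have "closed ((\<lambda>e. x + t *\<^sub>R e) -` G)" for t
              by (rule continuous_closed_vimage[OF Gc]) (intro continuous_intros)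
            ultimately have cS: "closed S" by (simp add: closed_INT)
            have pt: "e = 0" if "e \<in> S" "- e \<in> S" for e
            proof (rule ccontr)
              assume "e \<noteq> 0"
              moreover have "\<forall>t\<ge>0. x + t *\<^sub>R e \<in> G" "\<forall>t\<ge>0. x + t *\<^sub>R (- e) \<in> G"
                using that unfolding S_def by auto
              ultimately show False using line GK by blast
            qed
            obtain \<theta> where th: "cos \<theta> *\<^sub>R u + sin \<theta> *\<^sub>R v \<notin> S" "- (cos \<theta> *\<^sub>R u + sin \<theta> *\<^sub>R v) \<notin> S"
              using circle_dir[OF cS ind pt] by blast
            define e where "e = cos \<theta> *\<^sub>R u + sin \<theta> *\<^sub>R v"
            have eD: "e \<in> D" unfolding e_def using sD u(1) v(1)
              by (intro subspace_add subspace_scale) auto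
            have eB: "\<forall>b\<in>B. b \<bullet> e = 0" using u(3) v(3) by (simp add: e_def inner_add_right)
            have "\<not> (\<forall>t\<ge>0. x + t *\<^sub>R e \<in> G)" using th(1) unfolding e_def S_def by simp
            moreover have "\<not> (\<forall>t\<ge>0. x + t *\<^sub>R (- e) \<in> G)" using th(2) unfolding e_def S_def by simp
            ultimately show ?thesis using caseA eD eB by blast
          qed
        qed
      qed
    qed
  qed
  have "K face_of K" using Kv by (rule face_of_refl)
  moreover have "aff_dim K < int (Suc DIM('a))" using aff_dim_le_DIM[of K] by simp
  ultimately show ?thesis using main by blast
qed



lemma frob_inner: "frob A X = A \<bullet> X"
proof -
  have "frob A X = (\<Sum>j\<in>UNIV. \<Sum>k\<in>UNIV. A$k$j * X$k$j)"
    by (simp add: frob_def trace_def matrix_matrix_mult_def transpose_def)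
  also have "\<dots> = (\<Sum>k\<in>UNIV. \<Sum>j\<in>UNIV. A$k$j * X$k$j)" by (rule sum.swap)
  also have "\<dots> = A \<bullet> X" by (simp add: inner_vec_def)
  finally show ?thesis .
qed

lemma closed_ge_ereal: "closed {y::real. l \<le> ereal y}"
proof (cases l)
  case (real r)
  have "{y::real. l \<le> ereal y} = {r..}" using real by auto
  thus ?thesis by simp
qed simp_all

lemma closed_le_ereal: "closed {y::real. ereal y \<le> u}"
proof (cases u)
  case (real r)
  have "{y::real. ereal y \<le> u} = {..r}" using real by auto
  thus ?thesis by simp
qed simp_all

lemma convex_ereal_box: "convex {y::real. l \<le> ereal y \<and> ereal y \<le> u}"
proof -
  let ?S = "{y::real. l \<le> ereal y \<and> ereal y \<le> u}"
  have "x \<in> ?S" if "a \<in> ?S" "b \<in> ?S" "a \<le> x" "x \<le> b" for a b x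
  proof -
    have 1: "l \<le> ereal x" using that(1,3) order_trans[of l "ereal a" "ereal x"] by simp
    have 2: "ereal x \<le> u" using that(2,4) order_trans[of "ereal x" "ereal b" u] by simp
    show ?thesis using 1 2 by simp
  qed
  hence "is_interval ?S" unfolding is_interval_1 by blast
  thus ?thesis by (simp add: is_interval_convex_1)
qed

lemma general:
  fixes Q :: "(real^'p^'n) set"
  shows "theorem3_prop Q k mt m"
  unfolding theorem3_prop_def
proof (intro allI impI)
  fix t :: nat and F :: "nat \<Rightarrow> real^'p^'n \<Rightarrow> real" and A :: "nat \<Rightarrow> real^'p^'n" and bl bu :: "nat \<Rightarrow> ereal"
  define Xs where "Xs = domain_set Q k t F"
  assume ne: "domain_set Q k t F \<noteq> {}" and nl: "\<not> contains_line (clconv (domain_set Q k t F))"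
    and fc: "\<forall>Fc Fr. Fc face_of clconv (domain_set Q k t F) \<and> aff_dim Fc \<le> int mt \<and>
               Fr face_of rec_cone (clconv (domain_set Q k t F)) \<and> aff_dim Fr \<le> int mt + 1
               \<longrightarrow> minkowski_sum Fc Fr \<subseteq> domain_set Q k t F"
    and dA: "dim (span (A ` {..<m})) = mt"
  define P where "P = {X. \<forall>i<m. bl i \<le> ereal (frob (A i) X) \<and> ereal (frob (A i) X) \<le> bu i}"
  have lc: "lmi_cut S m A bl bu = S \<inter> P" for S by (auto simp: lmi_cut_def P_def)
  obtain B where B: "B \<subseteq> A ` {..<m}" "independent B" "A ` {..<m} \<subseteq> span B" "card B = dim (A ` {..<m})"
    using basis_exists by blast
  have fB: "finite B" using B(1) finite_subset by blast
  have cB: "card B \<le> mt" using B(4) dA by simp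
  have Pinv: "x + d \<in> P" if "x \<in> P" "\<forall>b\<in>B. b \<bullet> d = 0" for x d
  proof -
    have "A i \<bullet> d = 0" if "i < m" for i
    proof -
      have "A i \<in> span B" using B(3) that by blast
      moreover have "orthogonal d y" if "y \<in> B" for y
      proof -
        have "y \<bullet> d = 0" using \<open>\<forall>b\<in>B. b \<bullet> d = 0\<close> that by blast
        thus ?thesis by (simp add: orthogonal_def inner_commute)
      qed
      ultimately have "orthogonal d (A i)" by (rule orthogonal_to_span)
      thus ?thesis by (simp add: orthogonal_def inner_commute)
    qed
    thus ?thesis using \<open>x \<in> P\<close> by (simp add: P_def frob_inner inner_add_right)
  qed
  have core': "clconv Xs \<inter> P \<subseteq> convex hull (Xs \<inter> P)"
    by (rule core[OF refl _ _ _ fB cB Pinv]) (use ne nl fc Xs_def in auto)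
  have Pset: "P = (\<Inter>i\<in>{..<m}. (\<lambda>X. A i \<bullet> X) -` {y. bl i \<le> ereal y \<and> ereal y \<le> bu i})"
    by (auto simp: P_def frob_inner)
  have cP: "closed P"
  proof -
    have "closed ((\<lambda>X. A i \<bullet> X) -` {y. bl i \<le> ereal y \<and> ereal y \<le> bu i})" for i
    proof (rule continuous_closed_vimage)
      have "{y. bl i \<le> ereal y \<and> ereal y \<le> bu i} = {y. bl i \<le> ereal y} \<inter> {y. ereal y \<le> bu i}" by auto
      thus "closed {y. bl i \<le> ereal y \<and> ereal y \<le> bu i}" using closed_Int[OF closed_ge_ereal closed_le_ereal] by simp
    qed (intro continuous_intros)
    thus ?thesis unfolding Pset by (simp add: closed_INT)
  qed
  have vP: "convex P"
  proof -
    have "convex ((\<lambda>X. A i \<bullet> X) -` {y. bl i \<le> ereal y \<and> ereal y \<le> bu i})" for i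
      by (rule convex_linear_vimage[OF _ convex_ereal_box]) (simp add: linear_iff inner_add_right)
    thus ?thesis unfolding Pset by (simp add: convex_INT)
  qed
  have Kc: "closed (clconv Xs)" by (simp add: clconv_def)
  have Kv: "convex (clconv Xs)" by (simp add: clconv_def convex_closure)
  have XK: "Xs \<subseteq> clconv Xs" using closure_subset hull_subset unfolding clconv_def by fastforce
  have "clconv (Xs \<inter> P) \<subseteq> clconv Xs \<inter> P"
    unfolding clconv_def
  proof (rule closure_minimal)
    show "convex hull (Xs \<inter> P) \<subseteq> closure (convex hull Xs) \<inter> P"
      by (rule hull_minimal) (use XK vP Kv in \<open>auto simp: clconv_def intro: convex_Int\<close>)
    show "closed (closure (convex hull Xs) \<inter> P)" using cP by (simp add: closed_Int)
  qed
  moreover have "clconv Xs \<inter> P \<subseteq> clconv (Xs \<inter> P)"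
    using core' closure_subset unfolding clconv_def by blast
  ultimately show "lmi_cut (clconv (domain_set Q k t F)) m A bl bu = clconv (lmi_cut (domain_set Q k t F) m A bl bu)"
    unfolding lc Xs_def by blast
qed


theorem theorem3:
  fixes k mt m :: nat
  assumes "0 < k" and "mt \<le> m"
  shows "(k \<le> CARD('n) \<and> CARD('n) \<le> CARD('p) \<longrightarrow>
            theorem3_prop (UNIV :: (real^'p^'n) set) k mt m)
       \<and> (k \<le> CARD('n) \<longrightarrow> theorem3_prop (sym_mats :: (real^'n^'n) set) k mt m)
       \<and> (k \<le> CARD('n) \<longrightarrow> theorem3_prop (psd_mats :: (real^'n^'n) set) k mt m)"
  by (intro conjI impI general)

end
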